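(* Let $q$ be a prime power, $s\geq1$, $m\geq1$, $n=q^{s-1}$, and let $G$ be the $s\times n$ matrix over $\mathbb{F}_q$ whose first row is all ones and whose columns, restricted to the last $s-1$ rows, run through all vectors of $\mathbb{F}_q^{s-1}$. Let $P_i\in\mathrm{PG}(s-1,q)$ be the projective point of the $i$-th column of $G$; these are exactly the points of $\mathrm{PG}(s-1,q)$ outside the hyperplane $H: X_1=0$, and we identify $\mathrm{PG}(s-1,q)\setminus H$ with the affine space $\mathrm{AG}(s-1,q)$. Let $\mathcal{RM}_q(1,s-1)$ be the code over $\mathbb{F}_q$ generated by $G$. If $\mathbf{c}$ is a word of the extension code $\mathcal{RM}_q(1,s-1)\otimes\mathbb{F}_{q^m}$ of Hamming weight $q^{s-1}-q^{s-1-m}$, then the set $\{P_i: i\in\{1,\dots,n\}\setminus\mathrm{supp}(\mathbf{c})\}$ is exactly the set of all points of some affine subspace of $\mathrm{AG}(s-1,q)$ of codimension $m$.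
   Context: The extension code $C\otimes\mathbb{F}_{q^m}$ of a linear code $C\subseteq\mathbb{F}_q^n$ is the $\mathbb{F}_{q^m}$-linear span of $C$ in $\mathbb{F}_{q^m}^n$. The support $\mathrm{supp}(\mathbf{c})$ of a word is the set of its nonzero coordinates. Under the identification, the affine subspaces of $\mathrm{AG}(s-1,q)$ of codimension $m$ are the sets $\Pi\setminus H$ for projective subspaces $\Pi$ of codimension $m$ not contained in $H$. *)

theory Defs
  imports Complex_Main
begin

text \<open>A subfield F of the (finite) field 'K. Here 'K plays the role of F_{q^m} and F of F_q.\<close>
definition is_subfield :: "'K::field set \<Rightarrow> bool" where
  "is_subfield F \<longleftrightarrow> 0 \<in> F \<and> 1 \<in> F \<and>
     (\<forall>x\<in>F. \<forall>y\<in>F. x + y \<in> F \<and> x * y \<in> F) \<and>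
     (\<forall>x\<in>F. - x \<in> F \<and> inverse x \<in> F)"

text \<open>Points of AG(d,q) = F_q^d, as vectors indexed by {0..<d}, inside 'K (zero outside).\<close>
definition AGpts :: "'K::field set \<Rightarrow> nat \<Rightarrow> (nat \<Rightarrow> 'K) set" where
  "AGpts F d = {v. (\<forall>i<d. v i \<in> F) \<and> (\<forall>i\<ge>d. v i = 0)}"

text \<open>Entry (j,v) of the generator matrix G: row 0 is all ones, rows 1..s-1 give the
  coordinates of the affine point v (columns are indexed by the points v of AG(s-1,q)).\<close>
definition Gmat :: "nat \<Rightarrow> (nat \<Rightarrow> 'K::field) \<Rightarrow> 'K" where
  "Gmat j v = (if j = 0 then 1 else v (j - 1))"

text \<open>RM_q(1,s-1): the F_q-row space of G. Words are functions on the columns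
  (= points of AG(s-1,q)), extended by 0 outside.\<close>
definition RM_code :: "'K::field set \<Rightarrow> nat \<Rightarrow> ((nat \<Rightarrow> 'K) \<Rightarrow> 'K) set" where
  "RM_code F s = {c. \<exists>a. (\<forall>j<s. a j \<in> F) \<and>
      c = (\<lambda>v. if v \<in> AGpts F (s - 1) then (\<Sum>j<s. a j * Gmat j v) else 0)}"

definition ext_code :: "('p \<Rightarrow> 'K::field) set \<Rightarrow> ('p \<Rightarrow> 'K) set" where
  "ext_code C = {c. \<exists>S lam. finite S \<and> S \<subseteq> C \<and> c = (\<lambda>v. \<Sum>x\<in>S. lam x * x v)}"

definition hweight :: "'p set \<Rightarrow> ('p \<Rightarrow> 'K::zero) \<Rightarrow> nat" where
  "hweight P c = card {v \<in> P. c v \<noteq> 0}"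

definition affine_subspace_codim ::
    "'K::field set \<Rightarrow> nat \<Rightarrow> nat \<Rightarrow> (nat \<Rightarrow> 'K) set \<Rightarrow> bool" where
  "affine_subspace_codim F d m A \<longleftrightarrow> m \<le> d \<and>
     (\<exists>p u. p \<in> AGpts F d \<and> (\<forall>i<d - m. u i \<in> AGpts F d) \<and>
        (\<forall>t. (\<forall>i<d - m. t i \<in> F) \<and> (\<lambda>j. \<Sum>i<d - m. t i * u i j) = (\<lambda>j. 0)
              \<longrightarrow> (\<forall>i<d - m. t i = 0)) \<and>
        A = {(\<lambda>j. p j + (\<Sum>i<d - m. t i * u i j)) | t. \<forall>i<d - m. t i \<in> F})"

end

theory Submission
  imports Defs "HOL-Library.FuncSet"
begin


lemma sf0: "is_subfield F \<Longrightarrow> 0 \<in> F" by (simp add: is_subfield_def)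
lemma sf1: "is_subfield F \<Longrightarrow> 1 \<in> F" by (simp add: is_subfield_def)
lemma sfadd: "is_subfield F \<Longrightarrow> x \<in> F \<Longrightarrow> y \<in> F \<Longrightarrow> x + y \<in> F" by (simp add: is_subfield_def)
lemma sfmul: "is_subfield F \<Longrightarrow> x \<in> F \<Longrightarrow> y \<in> F \<Longrightarrow> x * y \<in> F" by (simp add: is_subfield_def)
lemma sfneg: "is_subfield F \<Longrightarrow> x \<in> F \<Longrightarrow> - x \<in> F" by (simp add: is_subfield_def)
lemma sfinv: "is_subfield F \<Longrightarrow> x \<in> F \<Longrightarrow> inverse x \<in> F" by (simp add: is_subfield_def)
lemma sfdiff: "is_subfield F \<Longrightarrow> x \<in> F \<Longrightarrow> y \<in> F \<Longrightarrow> x - y \<in> F"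
  using sfadd sfneg by (metis diff_conv_add_uminus)
lemma sfsum: "is_subfield F \<Longrightarrow> (\<And>x. x \<in> A \<Longrightarrow> f x \<in> F) \<Longrightarrow> sum f A \<in> F"
proof (induction A rule: infinite_finite_induct)
  case (infinite A) then show ?case by (simp add: sf0)
next
  case empty then show ?case by (simp add: sf0)
next
  case (insert x A) then show ?case by (simp add: sfadd)
qed

definition lc :: "(nat \<Rightarrow> 'K) \<Rightarrow> (nat \<Rightarrow> nat \<Rightarrow> 'K::field) \<Rightarrow> nat \<Rightarrow> nat \<Rightarrow> 'K" where
  "lc t u k = (\<lambda>j. \<Sum>i<k. t i * u i j)"
definition spanF :: "'K::field set \<Rightarrow> (nat \<Rightarrow> nat \<Rightarrow> 'K) \<Rightarrow> nat \<Rightarrow> (nat \<Rightarrow> 'K) set" where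
  "spanF F u k = {lc t u k | t. \<forall>i<k. t i \<in> F}"
definition indepF :: "'K::field set \<Rightarrow> (nat \<Rightarrow> nat \<Rightarrow> 'K) \<Rightarrow> nat \<Rightarrow> bool" where
  "indepF F u k \<longleftrightarrow> (\<forall>t. (\<forall>i<k. t i \<in> F) \<and> lc t u k = (\<lambda>j. 0) \<longrightarrow> (\<forall>i<k. t i = 0))"

lemma indepD: "indepF F u k \<Longrightarrow> \<forall>i<k. t i \<in> F \<Longrightarrow> lc t u k = (\<lambda>j. 0) \<Longrightarrow> i < k \<Longrightarrow> t i = 0"
  unfolding indepF_def by blast

lemma lc_Suc: "lc t u (Suc k) = (\<lambda>j. lc t u k j + t k * u k j)"
  by (simp add: lc_def)

lemma lc_cong: "(\<And>i. i < k \<Longrightarrow> t i = t' i) \<Longrightarrow> (\<And>i. i < k \<Longrightarrow> u i = u' i) \<Longrightarrow> lc t u k = lc t' u' k"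
  unfolding lc_def by (intro ext sum.cong) auto

lemma lc_in:
  assumes W0: "(\<lambda>j. 0) \<in> W" and Wadd: "\<And>x y. x \<in> W \<Longrightarrow> y \<in> W \<Longrightarrow> (\<lambda>j. x j + y j) \<in> W"
    and Wsc: "\<And>a x. a \<in> F \<Longrightarrow> x \<in> W \<Longrightarrow> (\<lambda>j. a * x j) \<in> W"
  shows "(\<forall>i<k. t i \<in> F) \<Longrightarrow> (\<forall>i<k. u i \<in> W) \<Longrightarrow> lc t u k \<in> W"
proof (induction k)
  case 0 then show ?case using W0 by (simp add: lc_def)
next
  case (Suc k)
  then show ?case unfolding lc_Suc using Wadd Wsc by simp
qed

lemma lc_diff: "lc (\<lambda>i. t i - t' i) u k = (\<lambda>j. lc t u k j - lc t' u k j)"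
  unfolding lc_def by (simp add: sum_subtractf left_diff_distrib)

lemma span_card:
  assumes sf: "is_subfield F" and ind: "indepF F u k"
  shows "card (spanF F u k) = card F ^ k"
proof -
  have eq: "spanF F u k = (\<lambda>t. lc t u k) ` (PiE {..<k} (\<lambda>_. F))"
  proof
    show "spanF F u k \<subseteq> (\<lambda>t. lc t u k) ` (PiE {..<k} (\<lambda>_. F))"
    proof
      fix x assume "x \<in> spanF F u k"
      then obtain t where t: "\<forall>i<k. t i \<in> F" "x = lc t u k" unfolding spanF_def by blast
      have r: "restrict t {..<k} \<in> PiE {..<k} (\<lambda>_. F)" using t(1) by simp
      have "x = lc (restrict t {..<k}) u k" unfolding t(2) by (rule lc_cong) simp_all
      from image_eqI[of x "\<lambda>t. lc t u k", OF this r] show "x \<in> (\<lambda>t. lc t u k) ` (PiE {..<k} (\<lambda>_. F))" .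
    qed
  next
    show "(\<lambda>t. lc t u k) ` (PiE {..<k} (\<lambda>_. F)) \<subseteq> spanF F u k"
    proof
      fix x assume "x \<in> (\<lambda>t. lc t u k) ` (PiE {..<k} (\<lambda>_. F))"
      then obtain t where t: "t \<in> PiE {..<k} (\<lambda>_. F)" "x = lc t u k" by blast
      have "\<forall>i<k. t i \<in> F" using PiE_mem[OF t(1)] by simp
      then show "x \<in> spanF F u k" unfolding spanF_def using t(2) by blast
    qed
  qed
  have inj: "inj_on (\<lambda>t. lc t u k) (PiE {..<k} (\<lambda>_. F))"
  proof (rule inj_onI)
    fix t t' assume t: "t \<in> PiE {..<k} (\<lambda>_. F)" and t': "t' \<in> PiE {..<k} (\<lambda>_. F)"
      and e: "lc t u k = lc t' u k"
    have "lc (\<lambda>i. t i - t' i) u k = (\<lambda>j. 0)" unfolding lc_diff e by simp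
    moreover have "\<forall>i<k. t i - t' i \<in> F" using PiE_mem[OF t] PiE_mem[OF t'] sf by (simp add: sfdiff)
    ultimately have z: "\<forall>i<k. t i - t' i = 0" using indepD[OF ind, of "\<lambda>i. t i - t' i"] by blast
    show "t = t'"
    proof (rule PiE_ext[OF t t'])
      fix i assume "i \<in> {..<k}" then show "t i = t' i" using z by simp
    qed
  qed
  have "card (spanF F u k) = card (PiE {..<k} (\<lambda>_. F))" unfolding eq by (rule card_image[OF inj])
  also have "\<dots> = card F ^ k" by (simp add: card_PiE)
  finally show ?thesis .
qed

lemma basis_exists:
  fixes W :: "(nat \<Rightarrow> 'K::field) set"
  assumes sf: "is_subfield F" and fin: "finite W"
    and W0: "(\<lambda>j. 0) \<in> W" and Wadd: "\<And>x y. x \<in> W \<Longrightarrow> y \<in> W \<Longrightarrow> (\<lambda>j. x j + y j) \<in> W"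
    and Wsc: "\<And>a x. a \<in> F \<Longrightarrow> x \<in> W \<Longrightarrow> (\<lambda>j. a * x j) \<in> W"
  shows "\<exists>k u. indepF F u k \<and> spanF F u k = W \<and> (\<forall>i<k. u i \<in> W)"
proof -
  have spsub: "spanF F u k \<subseteq> W" if uW: "\<forall>i<k. u i \<in> W" for u k
  proof
    fix x assume "x \<in> spanF F u k"
    then obtain t where t: "\<forall>i<k. t i \<in> F" "x = lc t u k" unfolding spanF_def by blast
    show "x \<in> W" unfolding t(2) by (rule lc_in[OF W0 Wadd Wsc t(1) uW])
  qed
  have main: "\<And>k u. indepF F u k \<Longrightarrow> (\<forall>i<k. u i \<in> W) \<Longrightarrow> card W - card (spanF F u k) = n \<Longrightarrow>
      \<exists>k u. indepF F u k \<and> spanF F u k = W \<and> (\<forall>i<k. u i \<in> W)" for n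
  proof (induction n rule: less_induct)
    case (less n k u)
    show ?case
    proof (cases "spanF F u k = W")
      case True then show ?thesis using less.prems by blast
    next
      case False
      with spsub[OF less.prems(2)] obtain w where w: "w \<in> W" "w \<notin> spanF F u k" by blast
      define u' where "u' = u(k := w)"
      have lcu': "lc t u' k = lc t u k" for t by (rule lc_cong) (auto simp: u'_def)
      have u'k: "u' k = w" by (simp add: u'_def)
      have u'W: "\<forall>i<Suc k. u' i \<in> W" using less.prems(2) w by (auto simp: u'_def less_Suc_eq)
      have ind': "indepF F u' (Suc k)"
        unfolding indepF_def
      proof (rule allI, rule impI)
        fix t assume a: "(\<forall>i<Suc k. t i \<in> F) \<and> lc t u' (Suc k) = (\<lambda>j. 0)"
        have z: "lc t u k j + t k * w j = 0" for j
        proof -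
          from a have "lc t u' (Suc k) j = 0" by simp
          then show ?thesis by (simp add: lc_Suc lcu' u'k)
        qed
        have tk: "t k = 0"
        proof (rule ccontr)
          assume nz: "t k \<noteq> 0"
          have "w = lc (\<lambda>i. - t i * inverse (t k)) u k"
          proof
            fix j
            have "w j = - lc t u k j * inverse (t k)" using z[of j] nz
              by (simp add: field_simps eq_neg_iff_add_eq_0)
            also have "\<dots> = lc (\<lambda>i. - t i * inverse (t k)) u k j"
              by (simp add: lc_def sum_distrib_left sum_negf mult_ac)
            finally show "w j = lc (\<lambda>i. - t i * inverse (t k)) u k j" .
          qed
          moreover have "\<forall>i<k. - t i * inverse (t k) \<in> F"
            using a sf by (auto intro!: sfmul sfneg sfinv)
          ultimately have "w \<in> spanF F u k" by (auto simp: spanF_def)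
          with w show False by simp
        qed
        have "lc t u k = (\<lambda>j. 0)" using z tk by auto
        then have "\<forall>i<k. t i = 0" using indepD[OF less.prems(1), of t] a by (auto simp: less_Suc_eq)
        with tk show "\<forall>i<Suc k. t i = 0" by (auto simp: less_Suc_eq)
      qed
      have sub: "spanF F u k \<subseteq> spanF F u' (Suc k)"
      proof
        fix x assume "x \<in> spanF F u k"
        then obtain t where t: "\<forall>i<k. t i \<in> F" "x = lc t u k" by (auto simp: spanF_def)
        have "lc (t(k := 0)) u' (Suc k) = x" unfolding lc_Suc t(2)
          by (simp add: lcu'[symmetric]) (rule lc_cong, auto)
        moreover have "\<forall>i<Suc k. (t(k:=0)) i \<in> F" using t sf0[OF sf] by (auto simp: less_Suc_eq)
        ultimately show "x \<in> spanF F u' (Suc k)" unfolding spanF_def by blast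
      qed
      have "lc (\<lambda>i. if i = k then 1 else 0) u' (Suc k) = w"
      proof -
        have "lc (\<lambda>i. if i = k then 1 else 0) u k = (\<lambda>j. 0)" unfolding lc_def by auto
        then show ?thesis unfolding lc_Suc lcu' by (simp add: u'_def)
      qed
      moreover have "\<forall>i<Suc k. (\<lambda>i. if i = k then 1 else (0::'K)) i \<in> F" using sf0[OF sf] sf1[OF sf] by auto
      ultimately have wsp: "w \<in> spanF F u' (Suc k)" unfolding spanF_def by blast
      have psub: "spanF F u k \<subset> spanF F u' (Suc k)" using sub wsp w by auto
      have "card (spanF F u k) < card (spanF F u' (Suc k))"
        using psub finite_subset[OF spsub[OF u'W] fin] by (rule psubset_card_mono[rotated])
      moreover have "card (spanF F u' (Suc k)) \<le> card W" using spsub[OF u'W] fin by (rule card_mono[rotated])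
      ultimately have "card W - card (spanF F u' (Suc k)) < n" using less.prems(3) by linarith
      then show ?thesis using less.IH ind' u'W by blast
    qed
  qed
  have "indepF F (\<lambda>_ _. 0) 0" by (simp add: indepF_def)
  then show ?thesis using main by fastforce
qed


lemma AG_eq: "AGpts F d = (\<lambda>f j. if j < d then f j else 0) ` (PiE {..<d} (\<lambda>_. F))"
proof
  show "AGpts F d \<subseteq> (\<lambda>f j. if j < d then f j else 0) ` (PiE {..<d} (\<lambda>_. F))"
  proof
    fix v assume v: "v \<in> AGpts F d"
    have "restrict v {..<d} \<in> PiE {..<d} (\<lambda>_. F)" using v by (auto simp: AGpts_def)
    moreover have "v = (\<lambda>j. if j < d then restrict v {..<d} j else 0)" using v by (auto simp: AGpts_def)
    ultimately show "v \<in> (\<lambda>f j. if j < d then f j else 0) ` (PiE {..<d} (\<lambda>_. F))" by blast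
  qed
qed (auto simp: AGpts_def PiE_def Pi_def)

lemma AG_card: "finite F \<Longrightarrow> card (AGpts F d) = card F ^ d \<and> finite (AGpts F d)"
proof -
  assume fin: "finite F"
  have inj: "inj_on (\<lambda>f j. if j < d then f j else (0::'a)) (PiE {..<d} (\<lambda>_. F))"
  proof (rule inj_onI)
    fix f g assume f: "f \<in> PiE {..<d} (\<lambda>_. F)" and g: "g \<in> PiE {..<d} (\<lambda>_. F)"
      and e: "(\<lambda>j. if j < d then f j else (0::'a)) = (\<lambda>j. if j < d then g j else 0)"
    show "f = g"
    proof (rule PiE_ext[OF f g])
      fix i assume "i \<in> {..<d}" then show "f i = g i" using fun_cong[OF e, of i] by simp
    qed
  qed
  show ?thesis unfolding AG_eq using card_image[OF inj] fin by (simp add: card_PiE finite_PiE)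
qed

theorem mainTheorem7:
  fixes F :: "'K::{field,finite} set" and q s m :: nat and c :: "(nat \<Rightarrow> 'K) \<Rightarrow> 'K"
  assumes "is_subfield F"
    and "card F = q"
    and "card (UNIV :: 'K set) = q ^ m"
    and "s \<ge> 1" and "m \<ge> 1"
    and "c \<in> ext_code (RM_code F s)"
    and "real (hweight (AGpts F (s - 1)) c) = real q ^ (s - 1) - real q powi (int (s - 1) - int m)"
  shows "\<exists>A. affine_subspace_codim F (s - 1) m A \<and> {v \<in> AGpts F (s - 1). c v = 0} = A"
proof -
  note sf = assms(1)
  define d where "d = s - 1"
  have s: "s = Suc d" using assms(4) by (simp add: d_def)
  define AG where "AG = AGpts F d"
  have finF: "finite F" by simp
  have cardAG: "card AG = q ^ d" and finAG: "finite AG" using AG_card[OF finF, of d] assms(2) by (auto simp: AG_def)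
  have q2: "q \<ge> 2"
  proof -
    have "{0,1} \<subseteq> F" using sf0[OF sf] sf1[OF sf] by auto
    from card_mono[OF finF this] show ?thesis using assms(2) by simp
  qed
  obtain S lam where S: "finite S" "S \<subseteq> RM_code F s" "c = (\<lambda>v. \<Sum>x\<in>S. lam x * x v)"
    using assms(6) by (auto simp: ext_code_def)
  define A where "A x = (SOME a. (\<forall>j<s. a j \<in> F) \<and>
      x = (\<lambda>v. if v \<in> AGpts F (s - 1) then (\<Sum>j<s. a j * Gmat j v) else 0))" for x
  have Ax: "x v = (\<Sum>j<s. A x j * Gmat j v)" if "x \<in> S" "v \<in> AG" for x v
  proof -
    have "\<exists>a. (\<forall>j<s. a j \<in> F) \<and>
      x = (\<lambda>v. if v \<in> AGpts F (s - 1) then (\<Sum>j<s. a j * Gmat j v) else 0)"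
      using that S(2) by (auto simp: RM_code_def)
    from someI_ex[OF this] have "x = (\<lambda>v. if v \<in> AGpts F (s - 1) then (\<Sum>j<s. A x j * Gmat j v) else 0)"
      unfolding A_def by blast
    from fun_cong[OF this, of v] show ?thesis using that(2) by (simp add: AG_def d_def)
  qed
  define B where "B j = (\<Sum>x\<in>S. lam x * A x j)" for j
  define b0 where "b0 = B 0"
  define \<beta> where "\<beta> j = B (Suc j)" for j
  have cform: "c v = b0 + (\<Sum>j<d. \<beta> j * v j)" if v: "v \<in> AG" for v
  proof -
    have "c v = (\<Sum>x\<in>S. lam x * (\<Sum>j<s. A x j * Gmat j v))" using Ax v S(3) by simp
    also have "\<dots> = (\<Sum>x\<in>S. \<Sum>j<s. lam x * A x j * Gmat j v)"
      by (simp add: sum_distrib_left mult.assoc)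
    also have "\<dots> = (\<Sum>j<s. \<Sum>x\<in>S. lam x * A x j * Gmat j v)"
      by (rule sum.swap)
    also have "\<dots> = (\<Sum>j<s. B j * Gmat j v)"
      unfolding B_def by (simp add: sum_distrib_right)
    also have "\<dots> = b0 + (\<Sum>j<d. \<beta> j * v j)"
      unfolding s sum.lessThan_Suc_shift by (simp add: Gmat_def b0_def \<beta>_def)
    finally show ?thesis .
  qed
  define hw where "hw = hweight AG c"
  have hweq: "real hw = real q ^ d - real q powi (int d - int m)" using assms(7) by (simp add: hw_def AG_def d_def)
  have hwle: "hw \<le> q ^ d" unfolding hw_def hweight_def using cardAG card_mono[OF finAG, of "{v \<in> AG. c v \<noteq> 0}"] by auto
  have md: "m \<le> d"
  proof (rule ccontr)
    assume "\<not> m \<le> d"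
    then have "int d - int m = - int (m - d)" by simp
    then have "real q powi (int d - int m) = 1 / real q ^ (m - d)"
      by (simp only: power_int_minus_divide power_int_of_nat)
    then have h1: "real hw = real q ^ d - 1 / real q ^ (m - d)" using hweq by simp
    have "real (q ^ d - hw) = real (q ^ d) - real hw" using hwle by (rule of_nat_diff)
    then have e: "real (q ^ d - hw) = 1 / real q ^ (m - d)" using h1 by simp
    have "real q ^ (m - d) \<ge> 2" using q2 \<open>\<not> m \<le> d\<close>
    proof -
      have "q ^ 1 \<le> q ^ (m - d)" using q2 \<open>\<not> m \<le> d\<close> by (intro power_increasing) auto
      then have "2 \<le> q ^ (m - d)" using q2 by simp
      then show ?thesis by (metis of_nat_le_iff of_nat_numeral of_nat_power)
    qed
    then have pos: "0 < real q ^ (m - d)" by linarith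
    have "0 < 1 / real q ^ (m - d)" using pos by simp
    moreover have "1 / real q ^ (m - d) < 1" using pos \<open>real q ^ (m - d) \<ge> 2\<close> by (simp add: divide_less_eq)
    ultimately have "0 < 1 / real q ^ (m - d)" "1 / real q ^ (m - d) < 1" by auto
    then have "0 < real (q ^ d - hw)" "real (q ^ d - hw) < 1" using e by simp_all
    then have "0 < q ^ d - hw" "q ^ d - hw < 1" by (simp only: of_nat_0_less_iff of_nat_less_1_iff)+
    then show False by linarith
  qed
  have hweq2: "hw + q ^ (d - m) = q ^ d"
  proof -
    have "int d - int m = int (d - m)" using md by simp
    then have "real q powi (int d - int m) = real q ^ (d - m)" by (simp only: power_int_of_nat)
    then have "real hw + real q ^ (d - m) = real q ^ d" using hweq by linarith
    then have "real (hw + q ^ (d - m)) = real (q ^ d)" by (simp only: of_nat_add of_nat_power)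
    then show ?thesis by (simp only: of_nat_eq_iff)
  qed
  define Z where "Z = {v \<in> AG. c v = 0}"
  have cardZ: "card Z = q ^ (d - m)"
  proof -
    have "AG = Z \<union> {v \<in> AG. c v \<noteq> 0}" "Z \<inter> {v \<in> AG. c v \<noteq> 0} = {}" by (auto simp: Z_def)
    then have "card AG = card Z + hw" unfolding hw_def hweight_def using finAG
      by (metis (no_types, lifting) card_Un_disjoint finite_Un)
    then show ?thesis using cardAG hweq2 by simp
  qed
  then have "Z \<noteq> {}" using q2 by (auto simp: card_eq_0_iff)
  then obtain p where pZ: "p \<in> Z" by blast
  have pAG: "p \<in> AG" and cp: "b0 + (\<Sum>j<d. \<beta> j * p j) = 0" using pZ cform by (auto simp: Z_def)
  define W where "W = {v \<in> AG. (\<Sum>j<d. \<beta> j * v j) = 0}"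
  have AGadd: "(\<lambda>j. x j + y j) \<in> AG" if "x \<in> AG" "y \<in> AG" for x y
    using that sf by (auto simp: AG_def AGpts_def intro: sfadd)
  have AGdiff: "(\<lambda>j. x j - y j) \<in> AG" if "x \<in> AG" "y \<in> AG" for x y
    using that sf by (auto simp: AG_def AGpts_def intro: sfdiff)
  have W0: "(\<lambda>j. 0) \<in> W" using sf0[OF sf] by (auto simp: W_def AG_def AGpts_def)
  have Wadd: "(\<lambda>j. x j + y j) \<in> W" if "x \<in> W" "y \<in> W" for x y
    using that AGadd by (auto simp: W_def distrib_left sum.distrib)
  have Wsc: "(\<lambda>j. a * x j) \<in> W" if "a \<in> F" "x \<in> W" for a x
  proof -
    have "(\<Sum>j<d. \<beta> j * (a * x j)) = a * (\<Sum>j<d. \<beta> j * x j)"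
      by (simp add: sum_distrib_left mult.left_commute)
    then show ?thesis using that sf by (auto simp: W_def AG_def AGpts_def intro: sfmul)
  qed
  have ZW: "Z = (\<lambda>w j. p j + w j) ` W"
  proof
    show "Z \<subseteq> (\<lambda>w j. p j + w j) ` W"
    proof
      fix v assume v: "v \<in> Z"
      then have vA: "v \<in> AG" and cv: "b0 + (\<Sum>j<d. \<beta> j * v j) = 0" using cform by (auto simp: Z_def)
      have "(\<Sum>j<d. \<beta> j * (v j - p j)) = (\<Sum>j<d. \<beta> j * v j) - (\<Sum>j<d. \<beta> j * p j)"
        by (simp add: right_diff_distrib sum_subtractf)
      also have "\<dots> = 0" using cv cp by (metis add_left_cancel diff_self)
      finally have ww: "(\<lambda>j. v j - p j) \<in> W" using AGdiff[OF vA pAG] by (simp add: W_def)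
      have "v = (\<lambda>w j. p j + w j) (\<lambda>j. v j - p j)" by simp
      from image_eqI[of v "\<lambda>w j. p j + w j" "\<lambda>j. v j - p j" W, OF this ww] show "v \<in> (\<lambda>w j. p j + w j) ` W" .
    qed
  next
    show "(\<lambda>w j. p j + w j) ` W \<subseteq> Z"
    proof
      fix v assume "v \<in> (\<lambda>w j. p j + w j) ` W"
      then obtain w where w: "w \<in> W" "v = (\<lambda>j. p j + w j)" by blast
      have vA: "v \<in> AG" using w AGadd[OF pAG] by (auto simp: W_def)
      have "c v = b0 + (\<Sum>j<d. \<beta> j * p j) + (\<Sum>j<d. \<beta> j * w j)"
        using cform[OF vA] w by (simp add: distrib_left sum.distrib add.assoc)
      then have "c v = 0" using cp w by (simp add: W_def)
      then show "v \<in> Z" using vA by (simp add: Z_def)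
    qed
  qed
  have finW: "finite W" using finAG by (simp add: W_def)
  have "inj_on (\<lambda>w j. p j + w j) W"
  proof (rule inj_onI)
    fix x y assume e: "(\<lambda>j. p j + x j) = (\<lambda>j. p j + y j)" and "x \<in> W" "y \<in> W"
    show "x = y"
    proof
      fix j show "x j = y j" using fun_cong[OF e, of j] by simp
    qed
  qed
  then have "card ((\<lambda>w j. p j + w j) ` W) = card W" by (rule card_image)
  then have cardW: "card W = q ^ (d - m)" using cardZ ZW by simp
  obtain k u where ku: "indepF F u k" "spanF F u k = W" "\<forall>i<k. u i \<in> W"
    using basis_exists[OF sf finW W0 Wadd Wsc] by blast
  have "q ^ k = q ^ (d - m)" using span_card[OF sf ku(1)] ku(2) cardW assms(2) by simp
  then have k: "k = d - m" using q2 by (simp add: power_inject_exp)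
  have "affine_subspace_codim F d m Z"
    unfolding affine_subspace_codim_def
  proof (intro conjI exI)
    show "m \<le> d" by fact
    show "p \<in> AGpts F d" using pAG by (simp add: AG_def)
    show "\<forall>i<d - m. u i \<in> AGpts F d" using ku(3) k by (auto simp: W_def AG_def)
    show "\<forall>t. (\<forall>i<d - m. t i \<in> F) \<and> (\<lambda>j. \<Sum>i<d - m. t i * u i j) = (\<lambda>j. 0) \<longrightarrow> (\<forall>i<d - m. t i = 0)"
      using ku(1) k by (simp add: indepF_def lc_def)
    show "Z = {(\<lambda>j. p j + (\<Sum>i<d - m. t i * u i j)) |t. \<forall>i<d - m. t i \<in> F}"
      unfolding ZW ku(2)[symmetric] spanF_def lc_def k by (simp add: setcompr_eq_image image_image)
  qed
  then show ?thesis unfolding Z_def AG_def d_def by blast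
qed

end
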